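(* For every $(s_0,p_0)\in G_2\setminus\{(0,0)\}$ there exist a finite Blaschke product $B$ of degree one or two with $B(0)=0$ and $\sigma\in\mathbb D\setminus\{0\}$ such that the map $\varphi(\lambda)=\big(B(\sqrt\lambda)+B(-\sqrt\lambda),\,B(\sqrt\lambda)B(-\sqrt\lambda)\big)$, $\lambda\in\mathbb D$, satisfies $\varphi(\sigma^2)=(s_0,p_0)$. Equivalently, writing $(s_0,p_0)=(t_1+t_2,t_1t_2)$ with $t_1,t_2\in\mathbb D$, there are such $B$ and $\sigma$ with $B(\sigma)=t_1$ and $B(-\sigma)=t_2$. *)

theory Defs
  imports "HOL-Analysis.Analysis"
begin

definition symmetrized_bidisc :: "(complex \<times> complex) set" where
  "symmetrized_bidisc = {(z1 + z2, z1 * z2) | z1 z2. norm z1 < 1 \<and> norm z2 < 1}"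

definition blaschke_factor :: "complex \<Rightarrow> complex \<Rightarrow> complex" where
  "blaschke_factor a z = (z - a) / (1 - cnj a * z)"

definition finite_blaschke :: "(complex \<Rightarrow> complex) \<Rightarrow> nat \<Rightarrow> bool" where
  "finite_blaschke B n \<longleftrightarrow>
     (\<exists>c as. norm c = 1 \<and> length as = n \<and> (\<forall>a\<in>set as. norm a < 1) \<and>
        (\<forall>z\<in>ball 0 1. B z = c * (\<Prod>a\<leftarrow>as. blaschke_factor a z)))"

definition sym_lift :: "(complex \<Rightarrow> complex) \<Rightarrow> complex \<Rightarrow> complex \<times> complex" where
  "sym_lift B w = (B (csqrt w) + B (- csqrt w), B (csqrt w) * B (- csqrt w))"

end

theory Submission
  imports Defs
begin

lemma key_ineq:
  fixes t1 t2 :: complex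
  assumes "norm t1 < 1" "norm t2 < 1"
  shows "norm (t1 + t2) < norm (1 + cnj t1 * t2)"
proof -
  have id: "(1 + cnj t1 * t2) * cnj (1 + cnj t1 * t2) - (t1+t2) * cnj (t1+t2)
      = (1 - t1 * cnj t1) * (1 - t2 * cnj t2)"
    by (simp add: algebra_simps)
  have "complex_of_real (norm (1 + cnj t1 * t2) ^ 2 - norm (t1+t2) ^ 2)
      = complex_of_real ((1 - norm t1 ^ 2) * (1 - norm t2 ^ 2))"
    by (simp only: of_real_diff of_real_mult of_real_1 complex_norm_square id)
  hence "norm (1 + cnj t1 * t2) ^ 2 - norm (t1+t2) ^ 2 = (1 - norm t1 ^ 2) * (1 - norm t2 ^ 2)"
    using of_real_eq_iff by blast
  moreover have "(1 - norm t1 ^ 2) * (1 - norm t2 ^ 2) > 0"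
    using assms by (simp add: abs_square_less_1)
  ultimately have "norm (t1 + t2) ^ 2 < norm (1 + cnj t1 * t2) ^ 2" by linarith
  thus ?thesis by (simp add: power_less_imp_less_base)
qed

lemma find_r:
  fixes t1 t2 :: complex
  assumes "norm t1 < 1" "norm t2 < 1" "t1 + t2 \<noteq> 0"
  shows "\<exists>r. max (norm t1) (norm t2) < r \<and> r < 1 \<and>
     2 * norm (complex_of_real r ^ 2 + cnj t1 * t2) = norm (t1 + t2) * (1 + r^2)"
proof -
  define f where "f x = 2 * norm (complex_of_real x ^ 2 + cnj t1 * t2) - norm (t1 + t2) * (1 + x^2)" for x
  define M where "M = max (norm t1) (norm t2)"
  have M1: "M < 1" "0 \<le> M" using assms by (auto simp: M_def max_def)
  have s0: "norm (t1+t2) > 0" using assms by simp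
  have nM: "norm (complex_of_real M ^ 2 + cnj t1 * t2) = M * norm (t1+t2)"
  proof (cases "norm t2 \<le> norm t1")
    case True
    hence "M = norm t1" by (simp add: M_def)
    hence "complex_of_real M ^ 2 + cnj t1 * t2 = cnj t1 * (t1 + t2)"
      by (simp add: complex_norm_square[symmetric] algebra_simps)
    thus ?thesis using \<open>M = norm t1\<close> by (simp add: norm_mult)
  next
    case False
    hence "M = norm t2" by (simp add: M_def)
    moreover have "(complex_of_real (norm t2))^2 = t2 * cnj t2" by (metis complex_norm_square of_real_power)
    ultimately have "complex_of_real M ^ 2 + cnj t1 * t2 = t2 * cnj (t1 + t2)"
      by (simp add: algebra_simps)
    thus ?thesis using \<open>M = norm t2\<close> by (simp add: norm_mult flip: complex_cnj_add)
  qed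
  have fM: "f M < 0"
  proof -
    have "f M = - norm (t1+t2) * (1 - M)^2" unfolding f_def nM by (simp add: algebra_simps power2_eq_square)
    moreover have "(1-M)^2 > 0" using M1 by simp
    ultimately show ?thesis using s0 by (simp add: mult_pos_pos)
  qed
  have f1: "f 1 > 0" unfolding f_def using key_ineq[OF assms(1,2)] by simp
  have cont: "\<forall>x. M \<le> x \<and> x \<le> 1 \<longrightarrow> isCont f x"
    unfolding f_def by (intro allI impI continuous_intros)
  obtain r where r: "M \<le> r" "r \<le> 1" "f r = 0"
    using IVT[of f M 0 1] fM f1 cont M1 by auto
  have "r \<noteq> M" using r fM by auto
  moreover have "r \<noteq> 1" using r f1 by auto
  ultimately have "M < r" "r < 1" using r by auto
  moreover have "2 * norm (complex_of_real r ^ 2 + cnj t1 * t2) = norm (t1 + t2) * (1 + r^2)"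
    using r(3) by (simp add: f_def)
  ultimately show ?thesis unfolding M_def by blast
qed

lemma aux_cancel:
  fixes A D Y w :: complex
  shows "A \<noteq> 0 \<Longrightarrow> D \<noteq> 0 \<Longrightarrow> Y \<noteq> 0 \<Longrightarrow> (A/D) * ((w*Y/A) / (Y/D)) = w"
  by (simp add: field_simps)

lemma main_case:
  fixes t1 t2 :: complex
  assumes t1: "norm t1 < 1" and t2: "norm t2 < 1" and s: "t1 + t2 \<noteq> 0"
  shows "\<exists>B r. finite_blaschke B 2 \<and> B 0 = 0 \<and> 0 < r \<and> r < 1 \<and>
     B (complex_of_real r) = t1 \<and> B (- complex_of_real r) = t2"
proof -
  obtain r where r: "max (norm t1) (norm t2) < r" "r < 1"
     and req: "2 * norm (complex_of_real r ^ 2 + cnj t1 * t2) = norm (t1 + t2) * (1 + r^2)"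
    using find_r[OF assms] by blast
  have r0: "0 < r" using r(1) norm_ge_zero[of t1] max.cobounded1[of "norm t1" "norm t2"] by linarith
  define R where "R = complex_of_real r"
  have R0: "R \<noteq> 0" using r0 by (simp add: R_def)
  have cR: "cnj R = R" by (simp add: R_def)
  have nR: "norm R = r" using r0 by (simp add: R_def)
  define q where "q = R^2 + cnj t1 * t2"
  have q0: "q \<noteq> 0"
  proof
    assume "q = 0"
    hence "norm (t1 + t2) * (1 + r^2) = 0" using req by (simp add: q_def R_def)
    moreover have "(1::real) + r^2 > 0" by (simp add: add_pos_nonneg)
    ultimately show False using s by simp
  qed
  define u where "u = t1 / R"
  define v where "v = t2 / R"
  have nu: "norm u < 1" using r r0 by (simp add: u_def norm_divide nR divide_less_eq)
  have nv: "norm v < 1" using r r0 by (simp add: v_def norm_divide nR divide_less_eq)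
  have uR: "u * R = t1" using R0 by (simp add: u_def)
  have vR: "v * R = t2" using R0 by (simp add: v_def)
  define e where "e = (t1+t2)*(1+R^2)/(2*q)"
  have ne: "norm e = 1"
  proof -
    have n1: "norm (1 + R^2) = 1 + r^2" unfolding R_def
      by (metis abs_of_nonneg norm_of_real of_real_1 of_real_add of_real_power zero_le_power2 add_nonneg_nonneg zero_le_one)
    have "norm e = norm (t1+t2) * (1+r^2) / (2 * norm q)"
      by (simp add: e_def norm_mult norm_divide n1)
    also have "\<dots> = 1" using req q0 s add_pos_nonneg[of 1 "r^2"] by (simp add: q_def R_def)
    finally show ?thesis .
  qed
  have ece: "e * cnj e = 1"
    using complex_norm_square[of e] ne by simp
  have keyeq: "(u+v)*(1+R^2) = 2*e*R*(1 + cnj u * v)"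
  proof -
    have h1: "1 + cnj u * v = q / R^2" using R0 by (simp add: u_def v_def q_def cR field_simps power2_eq_square)
    have h2: "2*e*q = (t1+t2)*(1+R^2)" using q0 by (simp add: e_def)
    have h3: "u + v = (t1+t2)/R" by (simp add: u_def v_def add_divide_distrib)
    show ?thesis unfolding h1 h3 using R0 h2 by (simp add: field_simps power2_eq_square)
  qed
  define c where "c = (e - u*R)/(1 - cnj u * e * R)"
  define a where "a = (e*R - u)/(e - u*R)"
  have d1: "e - u*R \<noteq> 0"
  proof
    assume "e - u*R = 0" hence "norm e = norm (u*R)" by simp
    thus False using ne uR t1 by simp
  qed
  have d2: "1 - cnj u * e * R \<noteq> 0"
  proof
    assume "1 - cnj u * e * R = 0" hence "norm (1::complex) = norm (cnj u * e * R)" by simp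
    thus False using ne nu nR r by (simp add: norm_mult) (metis mult_strict_mono' norm_ge_zero r0 less_le mult.commute nR mult_1_right order_less_irrefl)
  qed
  have d3: "1 - R^2 \<noteq> 0"
  proof
    assume "1 - R^2 = 0" hence "norm (R^2) = 1" by (metis eq_iff_diff_eq_0 norm_one)
    moreover have "r*r < 1*1" using r r0 by (intro mult_strict_mono) auto
    ultimately show False by (simp add: norm_power nR norm_mult power2_eq_square)
  qed
  have ca: "cnj a = (R - cnj u * e)/(1 - cnj u * e * R)"
  proof -
    have "cnj a = (cnj e * R - cnj u)/(cnj e - cnj u * R)" by (simp add: a_def cR)
    also have "\<dots> = (e * (cnj e * R - cnj u))/(e * (cnj e - cnj u * R))"
      using ne by (simp add: mult_divide_mult_cancel_left_if) (auto)
    also have "\<dots> = (R - cnj u * e)/(1 - cnj u * e * R)"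
      by (simp add: algebra_simps ece)
    finally show ?thesis .
  qed
  have nc: "norm c = 1"
  proof -
    have "1 - cnj u * e * R = e * cnj (e - u*R)" by (simp add: algebra_simps ece cR)
    hence "norm (1 - cnj u * e * R) = norm (e - u*R)" by (metis complex_mod_cnj norm_mult ne mult_1_left)
    thus ?thesis using d1 by (simp add: c_def norm_divide)
  qed
  have na: "norm a < 1"
  proof -
    have id: "(e-u*R)*cnj(e-u*R) - (e*R-u)*cnj(e*R-u) = (1 - R*cnj R)*(1 - u*cnj u)"
      using ece by (simp add: algebra_simps cR)
    have "complex_of_real (norm (e-u*R) ^ 2 - norm (e*R-u) ^ 2)
        = complex_of_real ((1 - norm R ^ 2) * (1 - norm u ^ 2))"
      by (simp only: of_real_diff of_real_mult of_real_1 complex_norm_square id)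
    hence "norm (e-u*R) ^ 2 - norm (e*R-u) ^ 2 = (1 - norm R ^ 2) * (1 - norm u ^ 2)"
      using of_real_eq_iff by blast
    moreover have "(1 - norm R ^ 2) * (1 - norm u ^ 2) > 0"
      using nu r r0 nR by (simp add: abs_square_less_1)
    ultimately have "norm (e*R-u) ^ 2 < norm (e-u*R) ^ 2" by linarith
    hence "norm (e*R-u) < norm (e-u*R)" by (simp add: power_less_imp_less_base)
    thus ?thesis using d1 by (simp add: a_def norm_divide divide_less_eq)
  qed
  define B where "B z = c * (\<Prod>a\<leftarrow>[0, a]. blaschke_factor a z)" for z
  have fb: "finite_blaschke B 2"
    unfolding finite_blaschke_def using nc na by (intro exI[of _ c] exI[of _ "[0,a]"]) (auto simp: B_def)
  have Bz: "B z = c * z * ((z - a)/(1 - cnj a * z))" for z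
    by (simp add: B_def blaschke_factor_def)
  have B1: "B R = t1"
  proof -
    have h1: "R - a = u*(1-R^2)/(e-u*R)" using d1 by (simp add: a_def field_simps power2_eq_square)
    have h2: "1 - cnj a * R = (1-R^2)/(1 - cnj u * e * R)" using d2 unfolding ca by (simp add: field_simps power2_eq_square)
    have "c * ((R - a)/(1 - cnj a * R)) = u"
      unfolding h1 h2 c_def using d1 d2 d3 by (rule aux_cancel)
    moreover have "B R = R * (c * ((R - a)/(1 - cnj a * R)))" by (simp only: Bz mult_ac)
    ultimately show ?thesis using uR by (simp add: mult.commute)
  qed
  have d4: "1 + R^2 - 2 * cnj u * e * R \<noteq> 0"
  proof
    assume "1 + R^2 - 2 * cnj u * e * R = 0"
    hence "complex_of_real (1 + r^2) = 2 * cnj u * e * R" by (simp add: R_def)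
    hence "norm (complex_of_real (1 + r^2)) = norm (2 * cnj u * e * R)" by simp
    moreover have "norm (2 * cnj u * e * R) = 2 * norm t1"
      using ne uR by (simp add: norm_mult flip: uR)
    moreover have "norm (complex_of_real (1 + r^2)) = 1 + r^2"
      unfolding norm_of_real by (simp add: add_nonneg_nonneg)
    moreover have "norm t1 < r" using r by simp
    moreover have "0 \<le> (1 - r)^2" by simp
    ultimately show False by (simp add: power2_eq_square algebra_simps)
  qed
  have B2: "B (-R) = t2"
  proof -
    have h1: "-R - a = (u*(1+R^2) - 2*e*R)/(e-u*R)" using d1 by (simp add: a_def field_simps power2_eq_square)
    have h2: "1 - cnj a * (-R) = (1 + R^2 - 2 * cnj u * e * R)/(1 - cnj u * e * R)" using d2 unfolding ca by (simp add: field_simps power2_eq_square)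
    have h3: "u*(1+R^2) - 2*e*R = - v * (1 + R^2 - 2 * cnj u * e * R)"
    proof -
      have "u*(1+R^2) - 2*e*R - (- v * (1 + R^2 - 2 * cnj u * e * R)) = (u+v)*(1+R^2) - 2*e*R*(1 + cnj u * v)"
        by (simp add: algebra_simps)
      also have "\<dots> = 0" using keyeq by (simp only: diff_self)
      finally show ?thesis by (rule iffD2[OF eq_iff_diff_eq_0])
    qed
    have "c * ((-R - a)/(1 - cnj a * (-R))) = -v"
      unfolding h1 h2 h3 c_def using d1 d2 d4 by (rule aux_cancel)
    moreover have "B (-R) = (-R) * (c * ((-R - a)/(1 - cnj a * (-R))))" by (simp only: Bz mult_ac)
    ultimately show ?thesis using vR by (simp add: mult.commute)
  qed
  have "B 0 = 0" by (simp add: Bz)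
  thus ?thesis using fb B1 B2 r r0 unfolding R_def by blast
qed

theorem mainTheorem6:
  fixes s0 p0 :: complex
  assumes "(s0, p0) \<in> symmetrized_bidisc" and "(s0, p0) \<noteq> (0, 0)"
  shows "\<exists>B \<sigma>. (finite_blaschke B 1 \<or> finite_blaschke B 2) \<and> B 0 = 0 \<and>
           \<sigma> \<in> ball 0 1 \<and> \<sigma> \<noteq> 0 \<and> sym_lift B (\<sigma>\<^sup>2) = (s0, p0)"
proof -
  obtain z1 z2 where z: "s0 = z1 + z2" "p0 = z1 * z2" "norm z1 < 1" "norm z2 < 1"
    using assms(1) unfolding symmetrized_bidisc_def by blast
  show ?thesis
  proof (cases "z1 + z2 = 0")
    case True
    hence z2: "z2 = - z1" by (simp add: eq_neg_iff_add_eq_0 add.commute)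
    have z10: "z1 \<noteq> 0" using assms(2) z z2 by auto
    have fb: "finite_blaschke (\<lambda>z. z) 1"
      unfolding finite_blaschke_def
      by (intro exI[of _ 1] exI[of _ "[0]"]) (auto simp: blaschke_factor_def)
    have sq: "(csqrt (z1^2))^2 = z1^2" by simp
    have "sym_lift (\<lambda>z. z) (z1^2) = (s0, p0)"
      unfolding sym_lift_def using z z2 sq by (simp add: power2_eq_square)
    thus ?thesis using fb z10 z(3) by (intro exI[of _ "\<lambda>z. z"] exI[of _ z1]) auto
  next
    case False
    obtain B r where B: "finite_blaschke B 2" "B 0 = 0" "0 < r" "r < 1"
        "B (complex_of_real r) = z1" "B (- complex_of_real r) = z2"
      using main_case[OF z(3,4) False] by blast
    have cs: "csqrt ((complex_of_real r)^2) = complex_of_real r"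
      using B(3) by (intro csqrt_unique) auto
    have "sym_lift B ((complex_of_real r)^2) = (s0, p0)"
      unfolding sym_lift_def cs using B z by simp
    thus ?thesis using B by (intro exI[of _ B] exI[of _ "complex_of_real r"]) auto
  qed
qed

end
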